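(* Let $d\in\mathbb{Z}_2$ with $d\equiv 3\pmod 4$ and consider $f(x)=x^2+x-d$ as a map $\mathbb{Z}_2\to\mathbb{Z}_2$. Then $f(2\mathbb{Z}_2)\subset 1+2\mathbb{Z}_2$, and $1+2\mathbb{Z}_2$ is the unique minimal component of $f$.
   Context: A minimal component of $f$ is a clopen set $E\subset\mathbb{Z}_2$ with $f(E)\subset E$ such that $f:E\to E$ is minimal (every orbit in $E$ is dense in $E$). *)

theory Defs
  imports "HOL-Analysis.Analysis"
begin

text \<open>An element of Z_2 is represented by the sequence of its residues
  x_n in {0..2^n-1} modulo 2^n, with x_(n+1) mod 2^n = x_n.\<close>

typedef z2 = "{x :: nat \<Rightarrow> int. \<forall>n. 0 \<le> x n \<and> x n < 2 ^ n \<and> x (Suc n) mod 2 ^ n = x n}"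
  by (rule exI[of _ "\<lambda>_. 0"]) simp

setup_lifting type_definition_z2

lemma z2_rep_range: "0 \<le> Rep_z2 x n" "Rep_z2 x n < 2 ^ n"
  using Rep_z2[of x] by auto

lemma z2_rep_mod [simp]: "Rep_z2 x n mod 2 ^ n = Rep_z2 x n"
  using z2_rep_range[of x n] by simp

lemma z2_rep_0 [simp]: "Rep_z2 x 0 = 0"
  using z2_rep_range[of x 0] by simp

lemma z2_rep_Suc: "Rep_z2 x (Suc n) mod 2 ^ n = Rep_z2 x n"
  using Rep_z2[of x] by auto

lemma z2_eqI: "(\<And>n. Rep_z2 x n = Rep_z2 y n) \<Longrightarrow> x = y"
  by (metis Rep_z2_inject ext)

lemma mod_pow2_Suc: "(a :: int) mod 2 ^ Suc n mod 2 ^ n = a mod 2 ^ n"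
  by (simp add: mod_mod_cancel)

lemma z2_norm:
  fixes g :: "nat \<Rightarrow> int"
  assumes "\<And>m. g (Suc m) mod 2 ^ m = g m mod 2 ^ m"
  shows "0 \<le> g n mod 2 ^ n \<and> g n mod 2 ^ n < 2 ^ n
            \<and> g (Suc n) mod 2 ^ Suc n mod 2 ^ n = g n mod 2 ^ n"
  using assms[of n] mod_pow2_Suc[of "g (Suc n)" n] by simp

instantiation z2 :: comm_ring_1
begin

lift_definition zero_z2 :: z2 is "\<lambda>n. 0" by simp

lift_definition one_z2 :: z2 is "\<lambda>n. 1 mod 2 ^ n"
  by (rule z2_norm) simp

lift_definition plus_z2 :: "z2 \<Rightarrow> z2 \<Rightarrow> z2" is "\<lambda>x y n. (x n + y n) mod 2 ^ n"
  by (rule z2_norm) (metis mod_add_eq)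

lift_definition times_z2 :: "z2 \<Rightarrow> z2 \<Rightarrow> z2" is "\<lambda>x y n. (x n * y n) mod 2 ^ n"
  by (rule z2_norm) (metis mod_mult_eq)

lift_definition minus_z2 :: "z2 \<Rightarrow> z2 \<Rightarrow> z2" is "\<lambda>x y n. (x n - y n) mod 2 ^ n"
  by (rule z2_norm) (metis mod_diff_eq)

lift_definition uminus_z2 :: "z2 \<Rightarrow> z2" is "\<lambda>x n. (- x n) mod 2 ^ n"
  by (rule z2_norm) (metis mod_minus_eq)

instance
proof
  fix a b c :: z2
  show "a + b + c = a + (b + c)"
    by (rule z2_eqI) (simp only: plus_z2.rep_eq mod_add_left_eq mod_add_right_eq add.assoc)
  show "a + b = b + a"
    by (rule z2_eqI) (simp only: plus_z2.rep_eq add.commute)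
  show "0 + a = a"
    by (rule z2_eqI) (simp only: plus_z2.rep_eq zero_z2.rep_eq add_0_left z2_rep_mod)
  show "- a + a = 0"
    by (rule z2_eqI) (simp only: plus_z2.rep_eq zero_z2.rep_eq uminus_z2.rep_eq
        mod_add_left_eq add.left_inverse mod_0)
  show "a - b = a + - b"
    by (rule z2_eqI) (simp only: plus_z2.rep_eq minus_z2.rep_eq uminus_z2.rep_eq
        mod_add_right_eq diff_conv_add_uminus)
  show "a * b * c = a * (b * c)"
    by (rule z2_eqI) (simp only: times_z2.rep_eq mod_mult_left_eq mod_mult_right_eq mult.assoc)
  show "a * b = b * a"
    by (rule z2_eqI) (simp only: times_z2.rep_eq mult.commute)
  show "1 * a = a"
    by (rule z2_eqI) (simp only: times_z2.rep_eq one_z2.rep_eq mod_mult_left_eq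
        mult_1_left z2_rep_mod)
  show "(a + b) * c = a * c + b * c"
    by (rule z2_eqI) (simp only: times_z2.rep_eq plus_z2.rep_eq mod_mult_left_eq
        mod_add_left_eq mod_add_right_eq distrib_right)
  show "(0::z2) \<noteq> 1"
  proof
    assume "(0::z2) = 1"
    then have "Rep_z2 0 1 = Rep_z2 1 1" by simp
    then show False by (simp add: zero_z2.rep_eq one_z2.rep_eq)
  qed
qed

end

lemma z2_rep_le: "n \<le> m \<Longrightarrow> Rep_z2 x m mod 2 ^ n = Rep_z2 x n"
proof (induction m rule: dec_induct)
  case base then show ?case by simp
next
  case (step m)
  have "Rep_z2 x (Suc m) mod 2 ^ n = Rep_z2 x (Suc m) mod 2 ^ m mod 2 ^ n"
    using step(1) by (simp add: mod_mod_cancel le_imp_power_dvd)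
  then show ?case using step z2_rep_Suc by simp
qed

instantiation z2 :: topological_space
begin

definition open_z2 :: "z2 set \<Rightarrow> bool" where
  "open_z2 U \<longleftrightarrow> (\<forall>x\<in>U. \<exists>n. \<forall>y. Rep_z2 y n = Rep_z2 x n \<longrightarrow> y \<in> U)"

instance
proof
  show "open (UNIV :: z2 set)" by (simp add: open_z2_def)
next
  fix S T :: "z2 set"
  assume S: "open S" and T: "open T"
  show "open (S \<inter> T)"
    unfolding open_z2_def
  proof
    fix x assume "x \<in> S \<inter> T"
    then have xS: "x \<in> S" and xT: "x \<in> T" by auto
    obtain n where n: "\<forall>y. Rep_z2 y n = Rep_z2 x n \<longrightarrow> y \<in> S"
      using S xS unfolding open_z2_def by blast
    obtain m where m: "\<forall>y. Rep_z2 y m = Rep_z2 x m \<longrightarrow> y \<in> T"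
      using T xT unfolding open_z2_def by blast
    show "\<exists>k. \<forall>y. Rep_z2 y k = Rep_z2 x k \<longrightarrow> y \<in> S \<inter> T"
    proof (intro exI allI impI)
      fix y assume "Rep_z2 y (max n m) = Rep_z2 x (max n m)"
      then have "Rep_z2 y n = Rep_z2 x n" "Rep_z2 y m = Rep_z2 x m"
        by (metis max.cobounded1 max.cobounded2 z2_rep_le)+
      then show "y \<in> S \<inter> T" using n m by simp
    qed
  qed
next
  fix K :: "z2 set set"
  assume K: "\<forall>S\<in>K. open S"
  show "open (\<Union>K)" unfolding open_z2_def
  proof
    fix x assume "x \<in> \<Union>K"
    then obtain S where S: "S \<in> K" "x \<in> S" by blast
    then obtain n where n: "\<forall>y. Rep_z2 y n = Rep_z2 x n \<longrightarrow> y \<in> S"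
      using K unfolding open_z2_def by blast
    show "\<exists>n. \<forall>y. Rep_z2 y n = Rep_z2 x n \<longrightarrow> y \<in> \<Union>K"
      using n S(1) by blast
  qed
qed

end

definition orbit :: "('a \<Rightarrow> 'a) \<Rightarrow> 'a \<Rightarrow> 'a set" where
  "orbit f x = {(f ^^ n) x | n. True}"

definition minimal_component :: "(z2 \<Rightarrow> z2) \<Rightarrow> z2 set \<Rightarrow> bool" where
  "minimal_component f E \<longleftrightarrow>
     E \<noteq> {} \<and> open E \<and> closed E \<and> f ` E \<subseteq> E \<and>
     (\<forall>x\<in>E. E \<subseteq> closure (orbit f x))"

end

theory Submission
  imports Defs "HOL-Number_Theory.Cong"
begin

definition Fd :: "int \<Rightarrow> int \<Rightarrow> int" where "Fd D t = t^2 + t - D"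

lemma Fd_cong: "[a = b] (mod m) \<Longrightarrow> [Fd D a = Fd D b] (mod m)"
  unfolding Fd_def by (intro cong_diff cong_add cong_pow) auto

lemma Fd_iter_cong: "[a = b] (mod m) \<Longrightarrow> [(Fd D ^^ k) a = (Fd D ^^ k) b] (mod m)"
  by (induction k) (auto intro: Fd_cong)

lemma Fd_odd: "odd D \<Longrightarrow> odd (Fd D t)"
  unfolding Fd_def by (auto simp: power2_eq_square)

lemma Fd_iter_odd: "odd D \<Longrightarrow> odd a \<Longrightarrow> odd ((Fd D ^^ k) a)"
  by (induction k) (auto simp: Fd_odd)

lemma sq_cong:
  fixes t t' :: int
  assumes "odd t" "odd t'" "[t = t'] (mod 2^(n+1))"
  shows "[t^2 = t'^2] (mod 2^(n+2))"
proof -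
  obtain s where s: "t - t' = 2^(n+1) * s" using assms(3)
    by (metis cong_iff_dvd_diff cong_sym dvd_def)
  obtain e where e: "t + t' = 2 * e" using assms(1,2) by (metis odd_add evenE)
  have "t^2 - t'^2 = (t - t') * (t + t')" by (simp add: power2_eq_square algebra_simps)
  also have "\<dots> = 2^(n+2) * (s * e)" using s e by simp
  finally show ?thesis by (metis cong_iff_dvd_diff dvd_triv_left cong_sym)
qed

definition Od :: "nat \<Rightarrow> int set" where "Od n = (\<lambda>j. 2 * int j + 1) ` {..<2^n}"

lemma Od_iff: "r \<in> Od n \<longleftrightarrow> 0 \<le> r \<and> r < 2^(n+1) \<and> odd r"
proof
  assume "r \<in> Od n"
  then obtain j where j: "r = 2 * int j + 1" "j < 2^n" unfolding Od_def by auto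
  have "int j < 2^n" using j(2) by (metis of_nat_less_iff of_nat_numeral of_nat_power)
  then have "r < 2^(n+1)" using j(1) by (simp only: power_Suc Suc_eq_plus1[symmetric])
  then show "0 \<le> r \<and> r < 2^(n+1) \<and> odd r" using j(1) by simp
next
  assume h: "0 \<le> r \<and> r < 2^(n+1) \<and> odd r"
  then obtain j where j: "r = 2 * j + 1" by (metis oddE)
  then have "j \<ge> 0" "j < 2^n" using h by auto
  then show "r \<in> Od n" unfolding Od_def using j
  proof (intro image_eqI[of _ _ "nat j"])
    show "r = 2 * int (nat j) + 1" using j \<open>j \<ge> 0\<close> by simp
    have "nat j < nat (2^n)" using \<open>j \<ge> 0\<close> \<open>j < 2^n\<close> by (simp add: nat_less_eq_zless)
    then show "nat j \<in> {..<2^n}" by (simp add: nat_power_eq)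
  qed
qed

lemma card_Od: "card (Od n) = 2^n"
  unfolding Od_def by (subst card_image) (auto simp: inj_on_def)

lemma sum_odd_sq: "3 * (\<Sum>j<N. (2 * int j + 1)^2) = int N * (4 * int N^2 - 1)"
  by (induction N) (auto simp: power2_eq_square algebra_simps)

lemma odd_mod_even: "even (m::int) \<Longrightarrow> odd a \<Longrightarrow> odd (a mod m)"
  by (metis dvd_mod_iff even_iff_mod_2_eq_zero mod_mod_cancel odd_iff_mod_2_eq_one)

definition PP :: "int \<Rightarrow> nat \<Rightarrow> bool" where
  "PP D n \<longleftrightarrow> (\<forall>y k. odd y \<longrightarrow> ([(Fd D^^k) y = y] (mod 2^(n+1)) \<longleftrightarrow> 2^n dvd k))"

lemma cover_inj:
  assumes P: "PP D n" and D: "odd D" and a: "odd a"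
  shows "inj_on (\<lambda>i. (Fd D^^i) a mod 2^(n+1)) {..<2^n}"
proof -
  have *: "False" if ij: "i < j" "j < 2^n" and eq: "(Fd D^^i) a mod 2^(n+1) = (Fd D^^j) a mod 2^(n+1)" for i j
  proof -
    let ?y = "(Fd D^^i) a"
    have "(Fd D^^j) a = (Fd D^^(j-i)) ?y"
      using ij by (metis funpow_add le_add_diff_inverse2 less_imp_le o_apply)
    then have "[(Fd D^^(j-i)) ?y = ?y] (mod 2^(n+1))" using eq by (simp add: cong_def)
    moreover have "odd ?y" using Fd_iter_odd D a by blast
    ultimately have "2^n dvd (j - i)" using P unfolding PP_def by blast
    moreover have "0 < j - i" "j - i < 2^n" using ij by auto
    ultimately show False using nat_dvd_not_less by blast
  qed
  show ?thesis unfolding inj_on_def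
    by (metis * lessThan_iff linorder_neqE_nat)
qed

lemma cover:
  assumes P: "PP D n" and D: "odd D" and a: "odd a"
  shows "(\<lambda>i. (Fd D^^i) a mod 2^(n+1)) ` {..<2^n} = Od n"
proof (rule card_subset_eq)
  show "finite (Od n)" unfolding Od_def by simp
  show "(\<lambda>i. (Fd D^^i) a mod 2^(n+1)) ` {..<2^n} \<subseteq> Od n"
  proof
    fix r assume "r \<in> (\<lambda>i. (Fd D^^i) a mod 2^(n+1)) ` {..<2^n}"
    then obtain i where r: "r = (Fd D^^i) a mod 2^(n+1)" by auto
    have "odd r" unfolding r by (rule odd_mod_even) (auto simp: Fd_iter_odd D a)
    moreover have "0 \<le> r" "r < 2^(n+1)" unfolding r by auto
    ultimately show "r \<in> Od n" by (simp add: Od_iff)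
  qed
  show "card ((\<lambda>i. (Fd D^^i) a mod 2^(n+1)) ` {..<2^n}) = card (Od n)"
    using card_image[OF cover_inj[OF assms]] by (simp add: card_Od)
qed

lemma Q:
  assumes P: "PP D n" and D: "D mod 4 = 3" and x: "odd x"
  shows "[(Fd D^^(2^n)) x = x + 2^(n+1)] (mod 2^(n+2))"
proof -
  obtain e where e: "D = 3 + 4 * e" using D by (metis mod_div_mult_eq add.commute mult.commute)
  have oD: "odd D" unfolding e by presburger
  define N :: nat where "N = 2^n"
  define M :: int where "M = 2^(n+1)"
  define xs where "xs i = (Fd D^^i) x" for i
  have "(Fd D^^N) x - x = (\<Sum>i<N. xs (Suc i) - xs i)"
    using sum_lessThan_telescope[of xs N] by (simp add: xs_def)
  also have "\<dots> = (\<Sum>i<N. (xs i)^2 - D)"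
    by (simp add: xs_def Fd_def)
  finally have e1: "(Fd D^^N) x - x = (\<Sum>i<N. (xs i)^2 - D)" .
  have "[(\<Sum>i<N. (xs i)^2 - D) = (\<Sum>i<N. (xs i mod M)^2 - D)] (mod 2^(n+2))"
  proof (rule cong_sum)
    fix i
    have o1: "odd (xs i)" unfolding xs_def using Fd_iter_odd oD x by blast
    have o2: "odd (xs i mod M)" using o1 by (intro odd_mod_even) (auto simp: M_def)
    have "[xs i = xs i mod M] (mod 2^(n+1))" by (simp add: M_def cong_def)
    then have "[(xs i)^2 = (xs i mod M)^2] (mod 2^(n+2))" using sq_cong o1 o2 by blast
    then show "[(xs i)^2 - D = (xs i mod M)^2 - D] (mod 2^(n+2))" by (intro cong_diff) auto
  qed
  also have "(\<Sum>i<N. (xs i mod M)^2 - D) = (\<Sum>r\<in>Od n. r^2 - D)"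
  proof -
    have "Od n = (\<lambda>i. xs i mod M) ` {..<N}"
      using cover[OF P oD x] by (simp add: xs_def M_def N_def)
    moreover have "inj_on (\<lambda>i. xs i mod M) {..<N}"
      using cover_inj[OF P oD x] by (simp add: xs_def M_def N_def)
    ultimately show ?thesis by (simp add: sum.reindex)
  qed
  also have "\<dots> = (\<Sum>j<N. (2 * int j + 1)^2 - D)"
    unfolding Od_def N_def by (subst sum.reindex) (auto simp: inj_on_def)
  also have "\<dots> = (\<Sum>j<N. (2 * int j + 1)^2) - int N * D"
    by (simp add: sum_subtractf)
  finally have c1: "[(Fd D^^N) x - x = (\<Sum>j<N. (2 * int j + 1)^2) - int N * D] (mod 2^(n+2))"
    using e1 by simp
  define S where "S = (\<Sum>j<N. (2 * int j + 1)^2)"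
  have NN: "(2::int)^(n+2) = 4 * int N" by (simp add: N_def)
  have "3 * (S - int N * D - 2 * int N) = (4 * int N) * (int N^2 - 4 - 3 * e)"
    using sum_odd_sq[of N] unfolding S_def e by (simp add: algebra_simps power2_eq_square)
  then have H: "4 * int N dvd 3 * (S - int N * D - 2 * int N)" by (metis dvd_triv_left)
  have C: "coprime (4 * int N) 3"
  proof -
    have c2: "coprime (2::int) 3"
      by (metis coprime_left_2_iff_odd odd_numeral)
    have "coprime ((2::int)^m) 3" for m using c2 by (simp add: coprime_power_left_iff)
    then have "coprime ((2::int)^(n+2)) 3" by blast
    then show ?thesis using NN by (simp only:)
  qed
  have "4 * int N dvd (S - int N * D - 2 * int N)"
    using H coprime_dvd_mult_right_iff[OF C] by blast
  then have "[S - int N * D = 2 * int N] (mod (4 * int N))"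
    by (simp only: cong_iff_dvd_diff)
  then have "[S - int N * D = 2 * int N] (mod 2^(n+2))"
    by (simp only: NN)
  then have "[(Fd D^^N) x - x = 2 * int N] (mod 2^(n+2))"
    using c1 unfolding S_def by (rule cong_trans[rotated])
  then have "(2::int)^(n+2) dvd (Fd D^^N) x - x - 2 * int N" by (simp only: cong_iff_dvd_diff)
  moreover have "(Fd D^^N) x - x - 2 * int N = (Fd D^^N) x - (x + 2^(n+1))"
    by (simp add: N_def)
  ultimately show ?thesis unfolding N_def by (simp only: cong_iff_dvd_diff N_def)
qed

lemma R:
  assumes P: "PP D n" and D: "D mod 4 = 3"
  shows "odd y \<Longrightarrow> [(Fd D^^(2^n*m)) y = y + int m * 2^(n+1)] (mod 2^(n+2))"
proof (induction m arbitrary: y)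
  case 0 then show ?case by simp
next
  case (Suc m)
  have oD: "odd D" using D by (metis dvd_mod_iff even_numeral odd_numeral dvd_trans[of 2 4] dvd_refl mod_mod_cancel
        [of 2 4] order_refl) 
  let ?y = "(Fd D^^(2^n)) y"
  have eq: "(Fd D^^(2^n * Suc m)) y = (Fd D^^(2^n*m)) ?y"
  proof -
    have "(2::nat)^n * Suc m = 2^n*m + 2^n" by simp
    then show ?thesis by (simp only: funpow_add o_apply)
  qed
  have "odd ?y" using Fd_iter_odd oD Suc.prems by blast
  then have c1: "[(Fd D^^(2^n*m)) ?y = ?y + int m * 2^(n+1)] (mod 2^(n+2))" by (rule Suc.IH)
  have c2: "[?y + int m * 2^(n+1) = (y + 2^(n+1)) + int m * 2^(n+1)] (mod 2^(n+2))"
    using Q[OF P D Suc.prems] by (intro cong_add) auto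
  have e3: "(y + 2^(n+1)) + int m * 2^(n+1) = y + int (Suc m) * 2^(n+1)" by (simp add: algebra_simps)
  show ?case using cong_trans[OF c1 c2] unfolding eq e3 .
qed

lemma PP_all:
  assumes D: "D mod 4 = 3"
  shows "PP D n"
proof (induction n)
  have oD: "odd D" using D by (metis dvd_mod_iff even_numeral odd_numeral dvd_trans[of 2 4] dvd_refl mod_mod_cancel
        [of 2 4] order_refl)
  case 0
  show ?case unfolding PP_def
  proof (intro allI impI)
    fix y k assume "odd (y::int)"
    then have "odd ((Fd D^^k) y)" using Fd_iter_odd oD by blast
    then show "[(Fd D^^k) y = y] (mod 2^(0+1)) \<longleftrightarrow> 2^0 dvd k"
      using \<open>odd y\<close> by (simp add: cong_def odd_iff_mod_2_eq_one)
  qed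
next
  case (Suc n)
  have oD: "odd D" using D by (metis dvd_mod_iff even_numeral odd_numeral dvd_trans[of 2 4] dvd_refl mod_mod_cancel
        [of 2 4] order_refl)
  show ?case unfolding PP_def
  proof (intro allI impI)
    fix y k assume y: "odd (y::int)"
    show "[(Fd D^^k) y = y] (mod 2^(Suc n+1)) \<longleftrightarrow> 2^Suc n dvd k"
    proof
      assume h: "[(Fd D^^k) y = y] (mod 2^(Suc n+1))"
      have "[(Fd D^^k) y = y] (mod 2^(n+1))"
        using h by (rule cong_dvd_modulus) (simp add: le_imp_power_dvd)
      then have "2^n dvd k" using Suc.IH y unfolding PP_def by blast
      then obtain m where k: "k = 2^n * m" by blast
      have "[(Fd D^^k) y = y + int m * 2^(n+1)] (mod 2^(n+2))"
        using R[OF Suc.IH D y] k by simp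
      then have "[y + int m * 2^(n+1) = y + 0] (mod 2^(n+2))"
        using h by (metis cong_sym cong_trans add_0_right Suc_eq_plus1 add_Suc_shift numeral_2_eq_2 add_Suc_right)
      then have "[int m * 2^(n+1) = 0] (mod 2^(n+2))"
        by (simp only: cong_add_lcancel)
      then have "2^(n+2) dvd int m * 2^(n+1)" by (simp only: cong_0_iff)
      moreover have "(2::int)^(n+2) = 2^(n+1) * 2" "int m * 2^(n+1) = 2^(n+1) * int m" by simp_all
      ultimately have "2^(n+1) * 2 dvd 2^(n+1) * int m" by (simp only:)
      then have "2 dvd int m" by (simp only: dvd_mult_cancel_left) simp
      then have "even m" by simp
      then show "2^Suc n dvd k" using k by auto
    next
      assume "2^Suc n dvd k"
      then obtain m where k: "k = 2^n * (2 * m)" by auto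
      have "[(Fd D^^k) y = y + int (2*m) * 2^(n+1)] (mod 2^(n+2))"
        using R[OF Suc.IH D y, of "2*m"] unfolding k .
      moreover have "[y + int (2*m) * 2^(n+1) = y] (mod 2^(n+2))"
        by (simp add: cong_iff_dvd_diff)
      ultimately show "[(Fd D^^k) y = y] (mod 2^(Suc n+1))"
        by (metis cong_trans Suc_eq_plus1 add_Suc_right numeral_2_eq_2 one_add_one add_Suc_shift)
    qed
  qed
qed


section \<open>Transfer to z2\<close>

lemma rep_numeral: "Rep_z2 (numeral k) n = numeral k mod 2^n"
proof (induction k)
  case One then show ?case by (simp add: one_z2.rep_eq)
next
  case (Bit0 k) then show ?case
    by (simp only: numeral_Bit0 plus_z2.rep_eq Bit0.IH mod_add_eq)
next
  case (Bit1 k) then show ?case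
    by (simp only: numeral_Bit1 plus_z2.rep_eq one_z2.rep_eq Bit1.IH mod_add_eq) (metis mod_add_eq mod_add_left_eq)
qed

lemma rep_f:
  assumes "[D = Rep_z2 d n] (mod 2^n)"
  shows "Rep_z2 (x^2 + x - d) n = Fd D (Rep_z2 x n) mod 2^n"
proof -
  let ?m = "(2::int)^n" and ?a = "Rep_z2 x n"
  have "Rep_z2 (x^2 + x - d) n = ((?a * ?a mod ?m + ?a) mod ?m - Rep_z2 d n) mod ?m"
    by (simp add: power2_eq_square plus_z2.rep_eq times_z2.rep_eq minus_z2.rep_eq)
  also have "\<dots> = ((?a * ?a + ?a) - Rep_z2 d n) mod ?m"
    by (simp add: mod_add_left_eq mod_diff_left_eq)
  also have "\<dots> = ((?a * ?a + ?a) - D mod ?m) mod ?m"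
    using assms by (simp add: cong_def)
  also have "\<dots> = Fd D ?a mod ?m"
    by (simp add: mod_diff_right_eq Fd_def power2_eq_square)
  finally show ?thesis .
qed

lemma rep_iter:
  assumes "[D = Rep_z2 d n] (mod 2^n)"
  shows "Rep_z2 (((\<lambda>x::z2. x^2 + x - d)^^k) x) n = (Fd D^^k) (Rep_z2 x n) mod 2^n"
proof (induction k)
  case 0 then show ?case by simp
next
  case (Suc k)
  have "Rep_z2 (((\<lambda>x::z2. x^2 + x - d)^^Suc k) x) n
      = Fd D (Rep_z2 (((\<lambda>x::z2. x^2 + x - d)^^k) x) n) mod 2^n"
    using rep_f[OF assms] by simp
  also have "\<dots> = Fd D ((Fd D^^k) (Rep_z2 x n)) mod 2^n"
    unfolding Suc.IH using Fd_cong[of "(Fd D^^k) (Rep_z2 x n) mod 2^n" "(Fd D^^k) (Rep_z2 x n)" "2^n" D]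
    by (simp add: cong_def)
  finally show ?case by simp
qed

lemma div2_mod: "((a::int) div 2) mod 2^n = (a mod 2^(Suc n)) div 2"
proof -
  have "a mod (2 * 2^n) = 2 * (a div 2 mod 2^n) + a mod 2"
    by (rule zmod_zmult2_eq) simp
  then show ?thesis by simp
qed

lemma odd_set_char: "{1 + 2 * y | y::z2. True} = {z. Rep_z2 z 1 = 1}"
proof (intro set_eqI iffI)
  fix z assume "z \<in> {1 + 2 * y | y::z2. True}"
  then obtain y where z: "z = 1 + 2 * y" by auto
  show "z \<in> {z. Rep_z2 z 1 = 1}" unfolding z
    by (simp add: plus_z2.rep_eq times_z2.rep_eq one_z2.rep_eq rep_numeral)
next
  fix z assume "z \<in> {z. Rep_z2 z 1 = 1}"
  then have z1: "Rep_z2 z 1 = 1" by simp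
  define g where "g n = Rep_z2 z (Suc n) div 2" for n
  have g: "g \<in> {x :: nat \<Rightarrow> int. \<forall>n. 0 \<le> x n \<and> x n < 2 ^ n \<and> x (Suc n) mod 2 ^ n = x n}"
  proof (safe)
    fix n
    show "0 \<le> g n" unfolding g_def using z2_rep_range by simp
    show "g n < 2^n" unfolding g_def using z2_rep_range(2)[of z "Suc n"] by simp
    show "g (Suc n) mod 2^n = g n" unfolding g_def div2_mod z2_rep_Suc ..
  qed
  have oddz: "odd (Rep_z2 z (Suc n))" for n
  proof -
    have "Rep_z2 z (Suc n) mod 2^1 = Rep_z2 z 1" by (rule z2_rep_le) simp
    then show ?thesis using z1 by (simp add: odd_iff_mod_2_eq_one)
  qed
  have "z = 1 + 2 * Abs_z2 g"
  proof (rule z2_eqI)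
    fix n
    have "Rep_z2 (1 + 2 * Abs_z2 g) n = (1 + 2 * g n) mod 2^n"
      by (simp only: plus_z2.rep_eq times_z2.rep_eq one_z2.rep_eq rep_numeral Abs_z2_inverse[OF g]
          mod_add_eq mod_mult_left_eq)
    also have "1 + 2 * g n = Rep_z2 z (Suc n)"
      unfolding g_def using oddz[of n] by (metis add.commute odd_two_times_div_two_succ)
    finally show "Rep_z2 z n = Rep_z2 (1 + 2 * Abs_z2 g) n" by (simp add: z2_rep_Suc)
  qed
  then show "z \<in> {1 + 2 * y | y::z2. True}" by blast
qed


lemma odd_rep: "Rep_z2 x 1 = 1 \<Longrightarrow> odd (Rep_z2 x (Suc n))"
proof -
  assume h: "Rep_z2 x 1 = 1"
  have "Rep_z2 x (Suc n) mod 2^1 = Rep_z2 x 1" by (rule z2_rep_le) simp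
  then show ?thesis using h by (simp add: odd_iff_mod_2_eq_one)
qed

theorem theoremF:
  fixes d :: z2
  assumes "\<exists>y. d = 3 + 4 * y"
  defines "f \<equiv> (\<lambda>x::z2. x ^ 2 + x - d)"
  shows "f ` {2 * y | y. True} \<subseteq> {1 + 2 * y | y. True}
         \<and> minimal_component f {1 + 2 * y | y. True}
         \<and> (\<forall>E. minimal_component f E \<longrightarrow> E = {1 + 2 * y | y. True})"
proof -
  let ?O = "{1 + 2 * y | y::z2. True}"
  have Ochar: "?O = {z. Rep_z2 z 1 = 1}" by (rule odd_set_char)
  obtain y0 where d: "d = 3 + 4 * y0" using assms(1) by blast
  have d2: "Rep_z2 d 2 = 3"
    by (simp add: d plus_z2.rep_eq times_z2.rep_eq rep_numeral)
  have Dn: "Rep_z2 d (m+2) mod 4 = 3" for m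
    using z2_rep_le[of 2 "m+2" d] d2 by simp
  have oD: "odd (Rep_z2 d (m+2))" for m
    using Dn[of m] by (metis dvd_mod_iff even_numeral odd_numeral dvd_trans[of 2 4] dvd_refl mod_mod_cancel
        [of 2 4] order_refl)
  have Dc: "[Rep_z2 d (m+2) = Rep_z2 d m] (mod 2^m)" for m
    unfolding cong_def by (simp add: z2_rep_le)
  have iter: "Rep_z2 ((f^^k) x) m = (Fd (Rep_z2 d (m+2))^^k) (Rep_z2 x m) mod 2^m" for k x m
    unfolding f_def by (rule rep_iter[OF Dc])
  have fO: "f w \<in> ?O" for w
  proof -
    have "Rep_z2 (f w) 1 = Fd (Rep_z2 d (1+2)) (Rep_z2 w 1) mod 2"
      using iter[of 1 w 1] by (simp only: One_nat_def funpow.simps o_apply id_apply power_one_right power_Suc power_0 mult_1_right)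
    moreover have "odd (Fd (Rep_z2 d (1+2)) (Rep_z2 w 1))"
      using Fd_odd oD[of 1] by blast
    ultimately show ?thesis unfolding Ochar by (simp add: odd_iff_mod_2_eq_one)
  qed
  have orbO: "orbit f x \<subseteq> ?O" if "x \<in> ?O" for x
  proof -
    have "(f^^n) x \<in> ?O" for n using that fO by (induction n) auto
    then show ?thesis unfolding orbit_def by blast
  qed
  have openO: "open ?O"
    unfolding open_z2_def Ochar by (intro ballI exI[of _ 1]) auto
  have closedO: "closed ?O"
    unfolding closed_def open_z2_def Ochar by (intro ballI exI[of _ 1]) auto
  have hit: "\<exists>k. Rep_z2 ((f^^k) x) n = Rep_z2 z n" if x: "x \<in> ?O" and z: "z \<in> ?O" for x z n
  proof -
    define D where "D = Rep_z2 d (Suc n + 2)"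
    have D4: "D mod 4 = 3" unfolding D_def by (rule Dn)
    have oDD: "odd D" unfolding D_def by (rule oD)
    have ax: "odd (Rep_z2 x (Suc n))" using x Ochar odd_rep by auto
    have "odd (Rep_z2 z (Suc n))" using z Ochar odd_rep by auto
    then have "Rep_z2 z (Suc n) \<in> Od n"
      unfolding Od_iff using z2_rep_range[of z "Suc n"] by simp
    then obtain i where i: "(Fd D^^i) (Rep_z2 x (Suc n)) mod 2^(n+1) = Rep_z2 z (Suc n)"
      unfolding cover[OF PP_all[OF D4] oDD ax, symmetric] by auto
    have "Rep_z2 ((f^^i) x) (Suc n) = Rep_z2 z (Suc n)"
      using iter[of i x "Suc n"] i unfolding D_def by simp
    then have "Rep_z2 ((f^^i) x) (Suc n) mod 2^n = Rep_z2 z (Suc n) mod 2^n" by simp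
    then show ?thesis by (auto simp: z2_rep_Suc)
  qed
  have dense: "?O \<subseteq> closure (orbit f x)" if x: "x \<in> ?O" for x
  proof
    fix z assume z: "z \<in> ?O"
    show "z \<in> closure (orbit f x)"
      unfolding closure_iff_nhds_not_empty
    proof (intro allI impI)
      fix A S assume SA: "S \<subseteq> A" and S: "open S" and zS: "z \<in> S"
      obtain n where n: "\<forall>y. Rep_z2 y n = Rep_z2 z n \<longrightarrow> y \<in> S"
        using S zS unfolding open_z2_def by blast
      obtain k where "Rep_z2 ((f^^k) x) n = Rep_z2 z n" using hit[OF x z] by blast
      then have "(f^^k) x \<in> S" using n by blast
      moreover have "(f^^k) x \<in> orbit f x" unfolding orbit_def by blast
      ultimately show "orbit f x \<inter> A \<noteq> {}" using SA by blast
    qed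
  qed
  have part1: "f ` {2 * y | y. True} \<subseteq> ?O" using fO by blast
  have one: "(1::z2) \<in> ?O" by (rule CollectI, rule exI[of _ 0]) simp
  have part2: "minimal_component f ?O"
    unfolding minimal_component_def using one openO closedO fO dense by blast
  have part3: "E = ?O" if E: "minimal_component f E" for E
  proof -
    have Ene: "E \<noteq> {}" and Ecl: "closed E" and fE: "f ` E \<subseteq> E"
      and Eden: "\<forall>x\<in>E. E \<subseteq> closure (orbit f x)"
      using E unfolding minimal_component_def by auto
    obtain x where xE: "x \<in> E" using Ene by blast
    have fxE: "f x \<in> E" using fE xE by blast
    have fxO: "f x \<in> ?O" by (rule fO)
    have "(f^^n) (f x) \<in> E" for n using fxE fE by (induction n) auto
    then have "orbit f (f x) \<subseteq> E" unfolding orbit_def by blast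
    then have c1: "closure (orbit f (f x)) \<subseteq> E" using Ecl by (rule closure_minimal)
    have c2: "closure (orbit f (f x)) \<subseteq> ?O" using orbO[OF fxO] closedO by (rule closure_minimal)
    show ?thesis using c1 c2 dense[OF fxO] Eden fxE by blast
  qed
  show ?thesis using part1 part2 part3 by blast
qed

end
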